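(* $J_n$ is the unique Chebyshev center of $\Omega_n$ relative to the metric space $(M_n(\mathbb{R}), \|\cdot\|_{\mathcal{S}_1})$ (i.e. the unique $A\in M_n(\mathbb{R})$ minimizing $\sup_{B\in\Omega_n}\|A-B\|_{\mathcal{S}_1}$), and the corresponding Chebyshev radius is $$ \inf_{A\in M_n(\mathbb{R})}\sup_{B\in\Omega_n}\|A-B\|_{\mathcal{S}_1} = n-1. $$
   Context: $\Omega_n$ denotes the set of $n\times n$ doubly stochastic matrices (nonnegative real entries, all row and column sums equal to $1$). $J_n$ is the $n\times n$ matrix with all entries equal to $1/n$. $\|A\|_{\mathcal{S}_1} := \sum_{i=1}^n\sigma_i(A)$ is the Schatten 1-norm (trace norm), where $\sigma_i(A)$ are the singular values of $A$. Given a constraint set $\mathcal{R}\subseteq M_n(\mathbb{R})$ and a norm, the Chebyshev radius of $\Omega_n$ is $\inf_{A\in\mathcal{R}}\sup_{B\in\Omega_n}\|A-B\|$ and a Chebyshev center is any $A\in\mathcal{R}$ attaining this infimum; "relative to the metric space $(M_n(\mathbb{R}),\|\cdot\|)$" means $\mathcal{R}=M_n(\mathbb{R})$. *)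

theory Defs
  imports "Jordan_Normal_Form.Char_Poly"
begin

text \<open>Singular values of a real n x n matrix A are the square roots of the eigenvalues of
  A^T A, counted with algebraic multiplicity (A^T A is symmetric positive semidefinite, so its
  characteristic polynomial splits over the reals with nonnegative roots).\<close>
definition trace_norm :: "real mat \<Rightarrow> real" where
  "trace_norm A =
     (let p = char_poly (transpose_mat A * A)
      in (\<Sum>r\<in>{x. poly p x = 0}. real (order r p) * sqrt r))"

definition doubly_stochastic :: "nat \<Rightarrow> real mat set" where
  "doubly_stochastic n = {B \<in> carrier_mat n n.
     (\<forall>i<n. \<forall>j<n. 0 \<le> B $$ (i, j)) \<and>
     (\<forall>i<n. (\<Sum>j<n. B $$ (i, j)) = 1) \<and>
     (\<forall>j<n. (\<Sum>i<n. B $$ (i, j)) = 1)}"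

definition Jmat :: "nat \<Rightarrow> real mat" where
  "Jmat n = mat n n (\<lambda>_. 1 / real n)"

definition cheb_dist :: "nat \<Rightarrow> real mat \<Rightarrow> real" where
  "cheb_dist n A = (SUP B\<in>doubly_stochastic n. trace_norm (A - B))"

end

theory Submission
  imports Defs
begin



lemma sum_delta_l: "i < (n::nat) \<Longrightarrow> (\<Sum>k<n. (if i = k then 1 else 0) * f k) = (f i :: real)"
  by (simp add: if_distrib[of "\<lambda>x. x * _"] sum.delta cong: if_cong)
lemma sum_delta_r: "i < (n::nat) \<Longrightarrow> (\<Sum>k<n. f k * (if k = i then 1 else 0)) = (f i :: real)"
  by (simp add: if_distrib[of "\<lambda>x. _ * x"] sum.delta cong: if_cong)

lemma householder:
  fixes w :: "nat \<Rightarrow> real"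
  assumes s: "(\<Sum>k<n. (w k)^2) \<noteq> 0"
  defines "H \<equiv> mat n n (\<lambda>(i,j). (if i = j then 1 else 0) - 2 * w i * w j / (\<Sum>k<n. (w k)^2))"
  shows "H * H = 1\<^sub>m n" "transpose_mat H = H"
proof -
  let ?s = "\<Sum>k<n. (w k)^2"
  show "transpose_mat H = H" unfolding H_def by (rule eq_matI) (auto simp: mult.commute)
  show "H * H = 1\<^sub>m n"
  proof (rule eq_matI)
    fix i j assume i: "i < dim_row (1\<^sub>m n)" and j: "j < dim_col (1\<^sub>m n)"
    hence i: "i < n" and j: "j < n" by auto
    have "(H * H) $$ (i,j) = (\<Sum>k<n. ((if i = k then 1 else 0) - 2 * w i * w k / ?s) * ((if k = j then 1 else 0) - 2 * w k * w j / ?s))"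
      unfolding H_def using i j by (simp add: scalar_prod_def atLeast0LessThan)
    also have "\<dots> = (\<Sum>k<n. (if i = k then 1 else 0) * (if k = j then 1 else 0))
        - (\<Sum>k<n. (if i = k then 1 else 0) * (2 * w k * w j / ?s))
        - (\<Sum>k<n. (2 * w i * w k / ?s) * (if k = j then 1 else 0))
        + (\<Sum>k<n. (2 * w i * w k / ?s) * (2 * w k * w j / ?s))"
      by (simp add: sum_subtractf sum.distrib algebra_simps)
    also have "(\<Sum>k<n. (2 * w i * w k / ?s) * (2 * w k * w j / ?s)) = (4 * w i * w j / ?s^2) * ?s"
    proof -
      have "(\<Sum>k<n. (2 * w i * w k / ?s) * (2 * w k * w j / ?s)) = (\<Sum>k<n. (4 * w i * w j / ?s^2) * (w k)^2)"
        by (intro sum.cong refl) (simp add: power2_eq_square)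
      thus ?thesis by (simp add: sum_distrib_left)
    qed
    also have "(4 * w i * w j / ?s^2) * ?s = 4 * w i * w j / ?s" using s by (simp add: power2_eq_square)
    also have "(\<Sum>k<n. (if i = k then 1 else 0) * (if k = j then 1 else 0)) = (if i = j then 1 else (0::real))"
      using i by (rule sum_delta_l)
    also have "(\<Sum>k<n. (if i = k then 1 else 0) * (2 * w k * w j / ?s)) = 2 * w i * w j / ?s"
      by (rule sum_delta_l[OF i])
    also have "(\<Sum>k<n. (2 * w i * w k / ?s) * (if k = j then 1 else 0)) = 2 * w i * w j / ?s"
      by (rule sum_delta_r[OF j])
    finally show "(H * H) $$ (i,j) = 1\<^sub>m n $$ (i,j)" using i j by simp
  qed (auto simp: H_def)
qed

lemma householder_exists:
  fixes v :: "real vec"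
  assumes v: "v \<in> carrier_vec n" and vv: "v \<bullet> v = 1" and n: "n > 0"
  shows "\<exists>H. H \<in> carrier_mat n n \<and> H * H = 1\<^sub>m n \<and> transpose_mat H = H \<and> (\<forall>i<n. H $$ (i,0) = v $ i)"
proof -
  have vv': "(\<Sum>k<n. (v$k)^2) = 1" using vv v by (simp add: scalar_prod_def atLeast0LessThan power2_eq_square)
  show ?thesis
  proof (cases "v $ 0 = 1")
    case True
    have "(\<Sum>k<n. (v$k)^2) = (v$0)^2 + (\<Sum>k\<in>{..<n}-{0}. (v$k)^2)"
      using n by (simp add: sum.remove)
    hence z: "(\<Sum>k\<in>{..<n}-{0}. (v$k)^2) = 0" using vv' True by simp
    have "\<forall>k\<in>{..<n}-{0}. (v$k)^2 = 0"
      using sum_nonneg_eq_0_iff[of "{..<n}-{0}" "\<lambda>k. (v$k)^2"] z by auto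
    hence "\<forall>i<n. (1\<^sub>m n :: real mat) $$ (i,0) = v $ i" using True n by auto
    thus ?thesis by (intro exI[of _ "1\<^sub>m n"]) auto
  next
    case False
    define w where "w k = v$k - (if k = 0 then 1 else 0)" for k
    have "(\<Sum>k<n. (w k)^2) = (\<Sum>k<n. (v$k)^2) - 2 * (\<Sum>k<n. (if k = 0 then v$k else 0)) + (\<Sum>k<n. (if k = 0 then 1 else 0))"
      unfolding w_def by (simp add: power2_eq_square algebra_simps sum_subtractf sum.distrib if_distrib[of "\<lambda>x. _ * x"] sum_distrib_left cong: if_cong)
    also have "\<dots> = 2 - 2 * v$0" using vv' n by (simp add: sum.delta)
    finally have s: "(\<Sum>k<n. (w k)^2) = 2 - 2 * v$0" .
    hence s0: "(\<Sum>k<n. (w k)^2) \<noteq> 0" using False by simp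
    define H where "H \<equiv> mat n n (\<lambda>(i,j). (if i = j then 1 else 0) - 2 * w i * w j / (\<Sum>k<n. (w k)^2))"
    have "\<forall>i<n. H $$ (i,0) = v $ i"
    proof (intro allI impI)
      fix i assume i: "i < n"
      have "H $$ (i,0) = (if i = 0 then 1 else 0) - 2 * w i * (v$0 - 1) / (2 - 2 * v$0)"
        unfolding H_def s using i n by (simp add: w_def)
      also have "\<dots> = (if i = 0 then 1 else 0) + w i" using False by (simp add: field_simps)
      also have "\<dots> = v $ i" by (simp add: w_def)
      finally show "H $$ (i,0) = v $ i" .
    qed
    thus ?thesis using householder[OF s0] unfolding H_def[symmetric]
      by (intro exI[of _ H]) (auto simp: H_def)
  qed
qed

lemma sym_real_eigenvalue:
  fixes M :: "real mat"
  assumes M: "M \<in> carrier_mat n n" and sym: "transpose_mat M = M" and n: "n > 0"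
  shows "\<exists>e. eigenvalue M e"
proof -
  define Mc where "Mc = map_mat complex_of_real M"
  have Mc: "Mc \<in> carrier_mat n n" using M by (simp add: Mc_def)
  obtain as where cp: "char_poly Mc = (\<Prod>a\<leftarrow>as. [:- a, 1:])" and len: "length as = n"
    using char_poly_factorized[OF Mc] by blast
  obtain a as' where as: "as = a # as'" using len n by (cases as) auto
  have "poly (char_poly Mc) a = 0" unfolding cp as by simp
  hence "eigenvalue Mc a" using eigenvalue_root_char_poly[OF Mc] by simp
  then obtain v where ev: "eigenvector Mc v a" unfolding eigenvalue_def by blast
  hence v: "v \<in> carrier_vec n" "v \<noteq> 0\<^sub>v n" "Mc *\<^sub>v v = a \<cdot>\<^sub>v v"
    unfolding eigenvector_def using Mc by auto
  have symm: "\<And>i j. i < n \<Longrightarrow> j < n \<Longrightarrow> M $$ (i,j) = M $$ (j,i)"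
    using sym M by (metis carrier_matD index_transpose_mat(1))
  define S where "S = (\<Sum>i<n. cnj (v$i) * (Mc *\<^sub>v v) $ i)"
  define N where "N = (\<Sum>i<n. cnj (v$i) * v$i)"
  have S1: "S = a * N" unfolding S_def N_def v(3) using v(1)
    by (simp add: sum_distrib_left algebra_simps)
  have Sexp: "S = (\<Sum>i<n. \<Sum>j<n. complex_of_real (M $$ (i,j)) * cnj (v$i) * v$j)"
    unfolding S_def using v(1) Mc M
    by (auto simp: Mc_def scalar_prod_def sum_distrib_left algebra_simps atLeast0LessThan intro!: sum.cong)
  have "cnj S = (\<Sum>i<n. \<Sum>j<n. complex_of_real (M $$ (i,j)) * v$i * cnj (v$j))"
    unfolding Sexp by (simp add: algebra_simps)
  also have "\<dots> = (\<Sum>j<n. \<Sum>i<n. complex_of_real (M $$ (i,j)) * v$i * cnj (v$j))"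
    by (rule sum.swap)
  also have "\<dots> = S" unfolding Sexp
    by (intro sum.cong refl, simp add: symm)
  finally have cS: "cnj S = S" .
  have Nr: "N = complex_of_real (\<Sum>i<n. (cmod (v$i))^2)"
    unfolding N_def by (simp add: complex_norm_square mult.commute del: of_real_power)
  obtain i where i: "i < n" "v $ i \<noteq> 0" using v(1,2) by (metis carrier_vecD eq_vecI index_zero_vec(1) index_zero_vec(2))
  have "(\<Sum>i<n. (cmod (v$i))^2) > 0"
  proof -
    have "(\<Sum>i<n. (cmod (v$i))^2) \<ge> (cmod (v$i))^2"
      by (rule member_le_sum) (use i in auto)
    moreover have "(cmod (v$i))^2 > 0" using i by simp
    ultimately show ?thesis by linarith
  qed
  hence N0: "N \<noteq> 0" unfolding Nr by (metis of_real_eq_0_iff order_less_irrefl)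
  have cN: "cnj N = N" unfolding Nr by simp
  have "cnj a * N = a * N" using cS cN unfolding S1 by (metis complex_cnj_mult)
  hence ca: "cnj a = a" using N0 by simp
  hence aRe: "a = complex_of_real (Re a)" by (metis Reals_cnj_iff complex_is_Real_iff of_real_Re)
  have "complex_of_real (poly (char_poly M) (Re a)) = poly (map_poly complex_of_real (char_poly M)) (complex_of_real (Re a))"
    by (simp add: of_real_hom.poly_map_poly)
  also have "map_poly complex_of_real (char_poly M) = char_poly Mc"
    unfolding Mc_def by (rule of_real_hom.char_poly_hom[OF M, symmetric])
  also have "complex_of_real (Re a) = a" using aRe by simp
  finally have "poly (char_poly M) (Re a) = 0" using \<open>poly (char_poly Mc) a = 0\<close> by simp
  thus ?thesis using eigenvalue_root_char_poly[OF M] by blast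
qed

lemma spectral:
  fixes M :: "real mat"
  assumes "M \<in> carrier_mat n n" "transpose_mat M = M"
  shows "\<exists>Q d. Q \<in> carrier_mat n n \<and> transpose_mat Q * Q = 1\<^sub>m n \<and>
     transpose_mat Q * M * Q = mat n n (\<lambda>(i,j). if i = j then d i else 0)"
  using assms
proof (induction n arbitrary: M)
  case 0
  thus ?case by (intro exI[of _ "1\<^sub>m 0"]) (auto intro!: eq_matI)
next
  case (Suc m M)
  let ?n = "Suc m"
  have M: "M \<in> carrier_mat ?n ?n" and symM: "transpose_mat M = M" by fact+
  obtain e where "eigenvalue M e" using sym_real_eigenvalue[OF M symM] by auto
  hence "eigenvector M (find_eigenvector M e) e" using find_eigenvector[OF M] by auto
  then obtain v0 where v0: "v0 \<in> carrier_vec ?n" "v0 \<noteq> 0\<^sub>v ?n" "M *\<^sub>v v0 = e \<cdot>\<^sub>v v0"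
    unfolding eigenvector_def using M by auto
  obtain i0 where i0: "i0 < ?n" "v0 $ i0 \<noteq> 0" using v0(1,2)
    by (metis carrier_vecD eq_vecI index_zero_vec(1) index_zero_vec(2))
  have vv0: "v0 \<bullet> v0 = (\<Sum>k<?n. (v0$k)^2)" using v0(1)
    by (simp add: scalar_prod_def atLeast0LessThan power2_eq_square)
  have "(\<Sum>k<?n. (v0$k)^2) \<ge> (v0$i0)^2" by (rule member_le_sum) (use i0 in auto)
  moreover have "(v0$i0)^2 > 0" using i0 by simp
  ultimately have pos: "v0 \<bullet> v0 > 0" unfolding vv0 by linarith
  define c where "c = 1 / sqrt (v0 \<bullet> v0)"
  define v where "v = c \<cdot>\<^sub>v v0"
  have v: "v \<in> carrier_vec ?n" unfolding v_def using v0 by simp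
  have vv: "v \<bullet> v = 1" unfolding v_def c_def using v0(1) pos
    by (simp add: power2_eq_square[symmetric] real_sqrt_pow2 del: real_sqrt_mult)
  have Mv: "M *\<^sub>v v = e \<cdot>\<^sub>v v" unfolding v_def using mult_mat_vec[OF M v0(1)] v0(3)
    by (simp add: smult_smult_assoc mult.commute)
  obtain H where H: "H \<in> carrier_mat ?n ?n" and HH: "H * H = 1\<^sub>m ?n" and HT: "transpose_mat H = H"
    and Hcol: "\<forall>i<?n. H $$ (i,0) = v $ i"
    using householder_exists[OF v vv] by auto
  define e0 :: "real vec" where "e0 = unit_vec ?n 0"
  have e0: "e0 \<in> carrier_vec ?n" unfolding e0_def by simp
  have He0: "H *\<^sub>v e0 = v"
    by (rule eq_vecI) (use H v Hcol in \<open>auto simp: e0_def\<close>)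
  have Hv: "H *\<^sub>v v = e0"
  proof -
    have "H *\<^sub>v v = (H * H) *\<^sub>v e0" unfolding He0[symmetric] using H e0 by simp
    thus ?thesis using HH e0 by simp
  qed
  define N where "N = H * M * H"
  have N: "N \<in> carrier_mat ?n ?n" unfolding N_def using H M by simp
  have Ne0: "N *\<^sub>v e0 = e \<cdot>\<^sub>v e0"
  proof -
    have "N *\<^sub>v e0 = H *\<^sub>v (M *\<^sub>v (H *\<^sub>v e0))" unfolding N_def
      using H M e0 by (simp add: assoc_mult_mat_vec[of "H*M" ?n ?n H ?n e0] assoc_mult_mat_vec[of H ?n ?n M ?n] del: assoc_mult_mat)
    also have "\<dots> = e \<cdot>\<^sub>v e0" unfolding He0 Mv mult_mat_vec[OF H v] Hv ..
    finally show ?thesis .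
  qed
  have Ncol: "N $$ (i,0) = (if i = 0 then e else 0)" if "i < ?n" for i
  proof -
    have "N $$ (i,0) = (N *\<^sub>v e0) $ i" using that N by (simp add: e0_def)
    thus ?thesis unfolding Ne0 using that by (simp add: e0_def)
  qed
  have NT: "transpose_mat N = N"
  proof -
    have HM: "H * M \<in> carrier_mat ?n ?n" using H M by simp
    have "transpose_mat N = transpose_mat H * transpose_mat (H * M)" unfolding N_def
      by (rule transpose_mult[OF HM H])
    also have "transpose_mat (H * M) = transpose_mat M * transpose_mat H" by (rule transpose_mult[OF H M])
    finally show ?thesis unfolding N_def HT symM using H M by (simp add: assoc_mult_mat[of H ?n ?n M ?n H ?n])
  qed
  have Nsym: "N $$ (i,j) = N $$ (j,i)" if "i < ?n" "j < ?n" for i j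
    using NT that N by (metis carrier_matD index_transpose_mat(1))
  define M' where "M' = mat m m (\<lambda>(i,j). N $$ (Suc i, Suc j))"
  have M': "M' \<in> carrier_mat m m" unfolding M'_def by simp
  have M'T: "transpose_mat M' = M'" unfolding M'_def by (rule eq_matI) (auto intro: Nsym)
  obtain Q' d' where Q': "Q' \<in> carrier_mat m m" and Q'Q': "transpose_mat Q' * Q' = 1\<^sub>m m"
    and Q'D: "transpose_mat Q' * M' * Q' = mat m m (\<lambda>(i,j). if i = j then d' i else 0)"
    using Suc.IH[OF M' M'T] by auto
  define E where "E = (mat 1 1 (\<lambda>_. e) :: real mat)"
  have Nblock: "N = four_block_mat E (0\<^sub>m 1 m) (0\<^sub>m m 1) M'"
  proof (rule eq_matI)
    fix i j assume "i < dim_row (four_block_mat E (0\<^sub>m 1 m) (0\<^sub>m m 1) M')" "j < dim_col (four_block_mat E (0\<^sub>m 1 m) (0\<^sub>m m 1) M')"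
    hence i: "i < ?n" and j: "j < ?n" using M' by (auto simp: E_def)
    show "N $$ (i,j) = four_block_mat E (0\<^sub>m 1 m) (0\<^sub>m m 1) M' $$ (i,j)"
    proof (cases "i = 0 \<or> j = 0")
      case True
      then show ?thesis using i j Ncol Nsym[of i j] Ncol[of j] M'
        by (auto simp: E_def)
    next
      case False
      then obtain i' j' where "i = Suc i'" "j = Suc j'" by (metis not0_implies_Suc)
      then show ?thesis using i j M' by (simp add: M'_def E_def)
    qed
  qed (use N M' in \<open>auto simp: E_def\<close>)
  define Q1 where "Q1 = four_block_mat (1\<^sub>m 1) (0\<^sub>m 1 m) (0\<^sub>m m 1) Q'"
  have Q1: "Q1 \<in> carrier_mat ?n ?n" unfolding Q1_def using Q' by (metis four_block_carrier_mat one_carrier_mat plus_1_eq_Suc)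
  have Q1T: "transpose_mat Q1 = four_block_mat (1\<^sub>m 1) (0\<^sub>m 1 m) (0\<^sub>m m 1) (transpose_mat Q')"
    unfolding Q1_def by (subst transpose_four_block_mat[of _ 1 1 _ m _ m]) (use Q' in auto)
  have Q1Q1: "transpose_mat Q1 * Q1 = 1\<^sub>m ?n"
  proof -
    have "transpose_mat Q1 * Q1 = four_block_mat (1\<^sub>m 1) (0\<^sub>m 1 m) (0\<^sub>m m 1) (transpose_mat Q' * Q')"
      unfolding Q1T unfolding Q1_def
      by (subst mult_four_block_mat[of _ 1 1 _ m _ m _ _ 1 _ m]) (use Q' in auto)
    also have "\<dots> = 1\<^sub>m ?n" unfolding Q'Q' by simp
    finally show ?thesis .
  qed
  define d where "d i = (if i = 0 then e else d' (i - 1))" for i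
  have Q1N: "transpose_mat Q1 * N * Q1 = mat ?n ?n (\<lambda>(i,j). if i = j then d i else 0)"
  proof -
    have "transpose_mat Q1 * N * Q1 = four_block_mat E (0\<^sub>m 1 m) (0\<^sub>m m 1) (transpose_mat Q' * M' * Q')"
    proof -
      have Q'T: "transpose_mat Q' \<in> carrier_mat m m" using Q' by simp
      have E: "E \<in> carrier_mat 1 1" by (simp add: E_def)
      have s1: "four_block_mat (1\<^sub>m 1) (0\<^sub>m 1 m) (0\<^sub>m m 1) (transpose_mat Q') * four_block_mat E (0\<^sub>m 1 m) (0\<^sub>m m 1) M'
          = four_block_mat E (0\<^sub>m 1 m) (0\<^sub>m m 1) (transpose_mat Q' * M')"
        by (subst mult_four_block_mat[of _ 1 1 _ m _ m _ _ 1 _ m]) (use Q'T M' E in auto)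
      have s2: "four_block_mat E (0\<^sub>m 1 m) (0\<^sub>m m 1) (transpose_mat Q' * M') * four_block_mat (1\<^sub>m 1) (0\<^sub>m 1 m) (0\<^sub>m m 1) Q'
          = four_block_mat E (0\<^sub>m 1 m) (0\<^sub>m m 1) (transpose_mat Q' * M' * Q')"
        by (subst mult_four_block_mat[of _ 1 1 _ m _ m _ _ 1 _ m]) (use Q'T M' E Q' in auto)
      show ?thesis unfolding Q1T unfolding Q1_def Nblock s1 s2 ..
    qed
    also have "\<dots> = mat ?n ?n (\<lambda>(i,j). if i = j then d i else 0)"
      unfolding Q'D by (rule eq_matI) (auto simp: E_def d_def)
    finally show ?thesis .
  qed
  define Q where "Q = H * Q1"
  have Q: "Q \<in> carrier_mat ?n ?n" unfolding Q_def using H Q1 by simp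
  have QT: "transpose_mat Q = transpose_mat Q1 * H" unfolding Q_def
    using transpose_mult[OF H Q1] HT by simp
  have "transpose_mat Q * Q = transpose_mat Q1 * (H * H) * Q1"
    unfolding QT unfolding Q_def using H Q1 by (simp add: assoc_mult_mat[of _ ?n ?n _ ?n _ ?n])
  hence QQ: "transpose_mat Q * Q = 1\<^sub>m ?n" using HH Q1Q1 Q1 by simp
  have "transpose_mat Q * M * Q = transpose_mat Q1 * N * Q1"
    unfolding QT unfolding Q_def N_def using H Q1 M by (simp add: assoc_mult_mat[of _ ?n ?n _ ?n _ ?n])
  hence "transpose_mat Q * M * Q = mat ?n ?n (\<lambda>(i,j). if i = j then d i else 0)" using Q1N by simp
  thus ?case using Q QQ by blast
qed


lemma prod_list_map_upt0: "prod_list (map f [0..<n]) = (\<Prod>i<n. f i)"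
  by (induction n) (auto simp: mult.commute)

lemma order_prod_linear:
  fixes d :: "nat \<Rightarrow> real"
  assumes "finite I"
  shows "order r (\<Prod>i\<in>I. [:- d i, 1:]) = card {i\<in>I. d i = r}"
  using assms
proof (induction I rule: finite_induct)
  case empty
  then show ?case by simp
next
  case (insert x F)
  have pF: "(\<Prod>i\<in>F. [:- d i, 1:]) \<noteq> 0" using insert(1) by (simp add: prod_zero_iff)
  have nz: "[:- d x, 1:] * (\<Prod>i\<in>F. [:- d i, 1:]) \<noteq> 0"
    by (rule no_zero_divisors) (use pF in auto)
  have o1: "order r [:- d x, 1:] = (if d x = r then 1 else 0)"
  proof (cases "d x = r")
    case True
    then show ?thesis using order_power_n_n[of r 1] by simp
  next
    case False
    then have P: "poly [:- d x, 1:] r \<noteq> 0" by simp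
    show ?thesis using False order_0I[OF P] by simp
  qed
  have "{i\<in>insert x F. d i = r} = (if d x = r then insert x {i\<in>F. d i = r} else {i\<in>F. d i = r})"
    by auto
  moreover have "x \<notin> {i\<in>F. d i = r}" using insert by auto
  ultimately have "card {i\<in>insert x F. d i = r} = (if d x = r then 1 else 0) + card {i\<in>F. d i = r}"
    using insert by auto
  then show ?case using insert order_mult[OF nz] o1 by simp
qed

lemma trace_norm_of_diag:
  fixes X :: "real mat" and d :: "nat \<Rightarrow> real"
  assumes cp: "char_poly (transpose_mat X * X) = (\<Prod>i<n. [:- d i, 1:])"
  shows "trace_norm X = (\<Sum>i<n. sqrt (d i))"
proof -
  let ?p = "\<Prod>i<n. [:- d i, 1:]"
  have roots: "{x. poly ?p x = 0} = d ` {..<n}"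
    by (auto simp: poly_prod prod_zero_iff)
  have "trace_norm X = (\<Sum>r\<in>d ` {..<n}. real (card {i\<in>{..<n}. d i = r}) * sqrt r)"
    unfolding trace_norm_def Let_def cp roots order_prod_linear[OF finite_lessThan] ..
  also have "\<dots> = (\<Sum>r\<in>d ` {..<n}. (\<Sum>i\<in>{i\<in>{..<n}. d i = r}. sqrt (d i)))"
    by (intro sum.cong refl) simp
  also have "\<dots> = (\<Sum>i<n. sqrt (d i))"
    by (rule sum.image_gen[symmetric]) simp
  finally show ?thesis .
qed

lemma tn_spectral:
  fixes X :: "real mat"
  assumes X: "X \<in> carrier_mat n n"
  shows "\<exists>Q d. Q \<in> carrier_mat n n \<and> transpose_mat Q * Q = 1\<^sub>m n \<and> Q * transpose_mat Q = 1\<^sub>m n \<and>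
     transpose_mat (X * Q) * (X * Q) = mat n n (\<lambda>(i,j). if i = j then d i else 0) \<and>
     trace_norm X = (\<Sum>i<n. sqrt (d i))"
proof -
  define M where "M = transpose_mat X * X"
  have M: "M \<in> carrier_mat n n" unfolding M_def using X by simp
  have MT: "transpose_mat M = M" unfolding M_def
    using transpose_mult[of "transpose_mat X" n n X n] X by simp
  obtain Q d where Q: "Q \<in> carrier_mat n n" and QQ: "transpose_mat Q * Q = 1\<^sub>m n"
    and QMQ: "transpose_mat Q * M * Q = mat n n (\<lambda>(i,j). if i = j then d i else 0)"
    using spectral[OF M MT] by blast
  have QT: "transpose_mat Q \<in> carrier_mat n n" using Q by simp
  have QQ': "Q * transpose_mat Q = 1\<^sub>m n" using mat_mult_left_right_inverse[OF QT Q QQ] .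
  define D where "D = mat n n (\<lambda>(i,j). if i = j then d i else (0::real))"
  have D: "D \<in> carrier_mat n n" unfolding D_def by simp
  have XQ: "transpose_mat (X * Q) * (X * Q) = transpose_mat Q * M * Q"
    unfolding M_def using transpose_mult[OF X Q] X Q
    by (simp add: assoc_mult_mat[of _ n n _ n _ n])
  have "Q * D * transpose_mat Q = (Q * transpose_mat Q) * M * (Q * transpose_mat Q)"
    unfolding D_def QMQ[symmetric] using Q M by (simp add: assoc_mult_mat[of _ n n _ n _ n])
  hence MD: "M = Q * D * transpose_mat Q" unfolding QQ' using M by simp
  have "similar_mat M D" unfolding similar_mat_def
    by (rule exI[of _ Q], rule exI[of _ "transpose_mat Q"], rule similar_mat_witI[of _ _ n])
       (use QQ QQ' MD M D Q QT in auto)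
  hence "char_poly M = char_poly D" by (rule char_poly_similar)
  also have "char_poly D = (\<Prod>a\<leftarrow>diag_mat D. [:- a, 1:])"
    by (rule char_poly_upper_triangular[OF D]) (auto simp: upper_triangular_def D_def)
  also have "\<dots> = (\<Prod>i<n. [:- d i, 1:])"
    unfolding diag_mat_def D_def by (simp add: prod_list_map_upt0 comp_def)
  finally have cp: "char_poly (transpose_mat X * X) = (\<Prod>i<n. [:- d i, 1:])" unfolding M_def .
  show ?thesis apply (rule exI[of _ Q], rule exI[of _ d]) using Q QQ QQ' XQ QMQ trace_norm_of_diag[OF cp] by simp
qed




lemma cs_card:
  fixes a :: "nat \<Rightarrow> real"
  assumes "finite S"
  shows "(\<Sum>i\<in>S. a i)^2 \<le> real (card S) * (\<Sum>i\<in>S. (a i)^2)"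
proof -
  have "0 \<le> (\<Sum>i\<in>S. \<Sum>j\<in>S. (a i - a j)^2)" by (intro sum_nonneg) auto
  also have "\<dots> = (\<Sum>i\<in>S. \<Sum>j\<in>S. (a i)^2 + (a j)^2 - 2 * (a i * a j))"
    by (intro sum.cong refl) (simp add: power2_eq_square algebra_simps)
  also have "\<dots> = (\<Sum>i\<in>S. real (card S) * (a i)^2 + (\<Sum>j\<in>S. (a j)^2) - 2 * a i * (\<Sum>j\<in>S. a j))"
    by (intro sum.cong refl) (simp add: sum.distrib sum_subtractf sum_distrib_left mult.assoc)
  also have "\<dots> = real (card S) * (\<Sum>i\<in>S. (a i)^2) + real (card S) * (\<Sum>j\<in>S. (a j)^2) - 2 * (\<Sum>i\<in>S. a i) * (\<Sum>j\<in>S. a j)"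
    by (simp add: sum.distrib sum_subtractf sum_distrib_left[symmetric] sum_distrib_right[symmetric])
  also have "\<dots> = 2 * (real (card S) * (\<Sum>i\<in>S. (a i)^2)) - 2 * (\<Sum>i\<in>S. a i)^2"
    by (simp add: power2_eq_square)
  finally show ?thesis by simp
qed

lemma cs_unit:
  fixes a b :: "nat \<Rightarrow> real"
  assumes "finite S" and a1: "(\<Sum>k\<in>S. (a k)^2) = 1"
  shows "(\<Sum>k\<in>S. a k * b k) \<le> sqrt (\<Sum>k\<in>S. (b k)^2)"
proof -
  define t where "t = (\<Sum>k\<in>S. a k * b k)"
  have "0 \<le> (\<Sum>k\<in>S. (b k - t * a k)^2)" by (intro sum_nonneg) auto
  also have "\<dots> = (\<Sum>k\<in>S. (b k)^2) - 2 * t * (\<Sum>k\<in>S. a k * b k) + t^2 * (\<Sum>k\<in>S. (a k)^2)"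
    by (simp add: power2_eq_square algebra_simps sum_subtractf sum.distrib sum_distrib_left)
  finally have "t^2 \<le> (\<Sum>k\<in>S. (b k)^2)" unfolding a1 t_def[symmetric] by (simp add: power2_eq_square)
  hence "sqrt (t^2) \<le> sqrt (\<Sum>k\<in>S. (b k)^2)" by (rule real_sqrt_le_mono)
  thus ?thesis unfolding t_def[symmetric] by simp
qed

definition frob :: "nat \<Rightarrow> real mat \<Rightarrow> real mat \<Rightarrow> real" where
  "frob n W X = (\<Sum>k<n. \<Sum>i<n. W $$ (k,i) * X $$ (k,i))"

lemma orth_row_sum:
  fixes Q :: "real mat"
  assumes Q: "Q \<in> carrier_mat n n" and QQ: "Q * transpose_mat Q = 1\<^sub>m n"
  shows "(\<Sum>j<n. (\<Sum>i<n. a i * Q $$ (i,j)) * (\<Sum>l<n. b l * Q $$ (l,j))) = (\<Sum>i<n. a i * b i)"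
proof -
  have QQe: "(\<Sum>j<n. Q $$ (i,j) * Q $$ (l,j)) = (if i = l then 1 else 0)" if "i < n" "l < n" for i l
  proof -
    have "(Q * transpose_mat Q) $$ (i,l) = (\<Sum>j<n. Q $$ (i,j) * Q $$ (l,j))"
      using Q that by (simp add: scalar_prod_def atLeast0LessThan)
    thus ?thesis using QQ that by simp
  qed
  have "(\<Sum>j<n. (\<Sum>i<n. a i * Q $$ (i,j)) * (\<Sum>l<n. b l * Q $$ (l,j)))
      = (\<Sum>j<n. \<Sum>i<n. \<Sum>l<n. a i * b l * (Q $$ (i,j) * Q $$ (l,j)))"
    by (simp add: sum_product algebra_simps)
  also have "\<dots> = (\<Sum>i<n. \<Sum>j<n. \<Sum>l<n. a i * b l * (Q $$ (i,j) * Q $$ (l,j)))"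
    by (rule sum.swap)
  also have "\<dots> = (\<Sum>i<n. \<Sum>l<n. \<Sum>j<n. a i * b l * (Q $$ (i,j) * Q $$ (l,j)))"
    by (intro sum.cong refl sum.swap)
  also have "\<dots> = (\<Sum>i<n. \<Sum>l<n. a i * b l * (if i = l then 1 else 0))"
    by (intro sum.cong refl) (simp add: sum_distrib_left[symmetric] QQe)
  also have "\<dots> = (\<Sum>i<n. a i * b i)"
    by (intro sum.cong refl) (simp add: if_distrib[of "\<lambda>x. _ * x"] cong: if_cong)
  finally show ?thesis .
qed

lemma frob_orth:
  fixes Q W X :: "real mat"
  assumes Q: "Q \<in> carrier_mat n n" and QQ: "Q * transpose_mat Q = 1\<^sub>m n"
    and W: "W \<in> carrier_mat n n" and X: "X \<in> carrier_mat n n"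
  shows "frob n (W * Q) (X * Q) = frob n W X"
proof -
  have e: "(A * Q) $$ (k,j) = (\<Sum>i<n. A $$ (k,i) * Q $$ (i,j))" if "A \<in> carrier_mat n n" "k < n" "j < n" for A k j
    using that Q by (simp add: scalar_prod_def atLeast0LessThan)
  have "frob n (W * Q) (X * Q) = (\<Sum>k<n. \<Sum>j<n. (\<Sum>i<n. W $$ (k,i) * Q $$ (i,j)) * (\<Sum>l<n. X $$ (k,l) * Q $$ (l,j)))"
    unfolding frob_def by (intro sum.cong refl) (simp add: e W X)
  also have "\<dots> = frob n W X" unfolding frob_def
    by (intro sum.cong refl orth_row_sum[OF Q QQ])
  finally show ?thesis .
qed

lemma col_sq_diag:
  fixes Y :: "real mat"
  assumes Y: "Y \<in> carrier_mat n n" and D: "transpose_mat Y * Y = mat n n (\<lambda>(i,j). if i = j then d i else 0)"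
    and j: "j < n"
  shows "(\<Sum>k<n. (Y $$ (k,j))^2) = d j"
proof -
  have "(transpose_mat Y * Y) $$ (j,j) = (\<Sum>k<n. (Y $$ (k,j))^2)"
    using Y j by (simp add: scalar_prod_def atLeast0LessThan power2_eq_square)
  thus ?thesis using D j by simp
qed

lemma duality:
  fixes W X :: "real mat"
  assumes W: "W \<in> carrier_mat n n" and X: "X \<in> carrier_mat n n" and WW: "transpose_mat W * W = 1\<^sub>m n"
  shows "frob n W X \<le> trace_norm X"
proof -
  obtain Q d where Q: "Q \<in> carrier_mat n n" and QQ: "transpose_mat Q * Q = 1\<^sub>m n"
    and QQ': "Q * transpose_mat Q = 1\<^sub>m n"
    and D: "transpose_mat (X * Q) * (X * Q) = mat n n (\<lambda>(i,j). if i = j then d i else 0)"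
    and tn: "trace_norm X = (\<Sum>i<n. sqrt (d i))"
    using tn_spectral[OF X] by blast
  have ZZ: "transpose_mat (W * Q) * (W * Q) = 1\<^sub>m n"
  proof -
    have "transpose_mat (W * Q) * (W * Q) = transpose_mat Q * (transpose_mat W * W) * Q"
      using transpose_mult[OF W Q] W Q by (simp add: assoc_mult_mat[of _ n n _ n _ n])
    thus ?thesis using WW QQ Q by simp
  qed
  have Z1: "(\<Sum>k<n. ((W * Q) $$ (k,j))^2) = 1" if "j < n" for j
  proof -
    have "transpose_mat (W*Q) * (W*Q) = mat n n (\<lambda>(i,j). if i = j then (\<lambda>_. 1) i else 0)"
      using ZZ by (simp add: one_mat_def)
    from col_sq_diag[OF _ this that] show ?thesis using W Q by simp
  qed
  have Y1: "(\<Sum>k<n. ((X * Q) $$ (k,j))^2) = d j" if "j < n" for j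
    using col_sq_diag[OF _ D that] X Q by simp
  have "frob n W X = frob n (W * Q) (X * Q)" using frob_orth[OF Q QQ' W X] by simp
  also have "\<dots> = (\<Sum>j<n. \<Sum>k<n. (W * Q) $$ (k,j) * (X * Q) $$ (k,j))"
    unfolding frob_def by (rule sum.swap)
  also have "\<dots> \<le> (\<Sum>j<n. sqrt (d j))"
  proof (intro sum_mono)
    fix j assume "j \<in> {..<n}"
    hence j: "j < n" by simp
    show "(\<Sum>k<n. (W * Q) $$ (k,j) * (X * Q) $$ (k,j)) \<le> sqrt (d j)"
      using cs_unit[of "{..<n}" "\<lambda>k. (W*Q)$$(k,j)" "\<lambda>k. (X*Q)$$(k,j)"] Z1[OF j] Y1[OF j] by simp
  qed
  finally show ?thesis using tn by simp
qed


lemma tn_bound: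
  fixes X :: "real mat"
  assumes X: "X \<in> carrier_mat n n"
  shows "trace_norm X \<le> sqrt (real n * frob n X X)"
    and "v \<in> carrier_vec n \<Longrightarrow> v \<noteq> 0\<^sub>v n \<Longrightarrow> X *\<^sub>v v = 0\<^sub>v n \<Longrightarrow>
         trace_norm X \<le> sqrt (real (n - 1) * frob n X X)"
proof -
  obtain Q d where Q: "Q \<in> carrier_mat n n" and QQ: "transpose_mat Q * Q = 1\<^sub>m n"
    and QQ': "Q * transpose_mat Q = 1\<^sub>m n"
    and D: "transpose_mat (X * Q) * (X * Q) = mat n n (\<lambda>(i,j). if i = j then d i else 0)"
    and tn: "trace_norm X = (\<Sum>i<n. sqrt (d i))"
    using tn_spectral[OF X] by blast
  have XQ: "X * Q \<in> carrier_mat n n" using X Q by simp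
  have dj: "(\<Sum>k<n. ((X * Q) $$ (k,j))^2) = d j" if "j < n" for j
    using col_sq_diag[OF XQ D that] .
  have d0: "d j \<ge> 0" if "j < n" for j using dj[OF that, symmetric] by (simp add: sum_nonneg)
  have fr: "frob n X X = (\<Sum>j<n. d j)"
  proof -
    have "frob n X X = frob n (X * Q) (X * Q)" using frob_orth[OF Q QQ' X X] by simp
    also have "\<dots> = (\<Sum>j<n. \<Sum>k<n. ((X * Q) $$ (k,j))^2)"
      unfolding frob_def by (subst sum.swap) (simp add: power2_eq_square)
    also have "\<dots> = (\<Sum>j<n. d j)" by (intro sum.cong refl) (simp add: dj)
    finally show ?thesis .
  qed
  have gen: "(\<Sum>j\<in>S. sqrt (d j)) \<le> sqrt (real (card S) * (\<Sum>j<n. d j))" if S: "S \<subseteq> {..<n}" for S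
  proof -
    have fS: "finite S" using S finite_subset by blast
    have "(\<Sum>j\<in>S. sqrt (d j))^2 \<le> real (card S) * (\<Sum>j\<in>S. (sqrt (d j))^2)" by (rule cs_card[OF fS])
    also have "(\<Sum>j\<in>S. (sqrt (d j))^2) = (\<Sum>j\<in>S. d j)"
      by (intro sum.cong refl) (use S d0 in auto)
    also have "(\<Sum>j\<in>S. d j) \<le> (\<Sum>j<n. d j)"
      by (rule sum_mono2) (use S d0 in auto)
    finally have "(\<Sum>j\<in>S. sqrt (d j))^2 \<le> real (card S) * (\<Sum>j<n. d j)"
      by (simp add: mult_left_mono)
    thus ?thesis by (rule real_le_rsqrt)
  qed
  show "trace_norm X \<le> sqrt (real n * frob n X X)" using gen[of "{..<n}"] unfolding tn fr by simp
  assume v: "v \<in> carrier_vec n" and v0: "v \<noteq> 0\<^sub>v n" and Xv: "X *\<^sub>v v = 0\<^sub>v n"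
  define u where "u = transpose_mat Q *\<^sub>v v"
  have u: "u \<in> carrier_vec n" unfolding u_def using Q v by (intro mult_mat_vec_carrier[of _ n n]) auto
  have "(Q * transpose_mat Q) *\<^sub>v v = Q *\<^sub>v u" unfolding u_def by (rule assoc_mult_mat_vec) (use Q v in auto)
  hence Qu: "Q *\<^sub>v u = v" using QQ' v by simp
  have u0: "u \<noteq> 0\<^sub>v n"
  proof
    assume "u = 0\<^sub>v n"
    hence "Q *\<^sub>v u = 0\<^sub>v n" using Q by (auto intro!: eq_vecI simp: scalar_prod_def)
    thus False using Qu v0 by simp
  qed
  have "(X * Q) *\<^sub>v u = X *\<^sub>v (Q *\<^sub>v u)" by (rule assoc_mult_mat_vec) (use X Q u in auto)
  hence Yu: "(X * Q) *\<^sub>v u = 0\<^sub>v n" using Qu Xv by simp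
  have "(transpose_mat (X * Q) * (X * Q)) *\<^sub>v u = transpose_mat (X * Q) *\<^sub>v ((X * Q) *\<^sub>v u)"
    by (rule assoc_mult_mat_vec) (use XQ u in auto)
  hence "(transpose_mat (X * Q) * (X * Q)) *\<^sub>v u = 0\<^sub>v n" using Yu XQ by (auto intro!: eq_vecI simp: scalar_prod_def)
  hence Du: "mat n n (\<lambda>(i,j). if i = j then d i else 0) *\<^sub>v u = 0\<^sub>v n" unfolding D .
  obtain i0 where i0: "i0 < n" "u $ i0 \<noteq> 0" using u u0
    by (metis carrier_vecD eq_vecI index_zero_vec(1) index_zero_vec(2))
  have "(mat n n (\<lambda>(i,j). if i = j then d i else 0) *\<^sub>v u) $ i0 = d i0 * u $ i0"
    using i0 u by (simp add: scalar_prod_def atLeast0LessThan if_distrib[of "\<lambda>x. x * _"] sum.delta cong: if_cong)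
  hence di0: "d i0 = 0" using Du i0 by simp
  have "(\<Sum>j<n. sqrt (d j)) = sqrt (d i0) + (\<Sum>j\<in>{..<n}-{i0}. sqrt (d j))"
    using i0 by (simp add: sum.remove)
  also have "\<dots> = (\<Sum>j\<in>{..<n}-{i0}. sqrt (d j))" using di0 by simp
  also have "\<dots> \<le> sqrt (real (card ({..<n}-{i0})) * (\<Sum>j<n. d j))" by (rule gen) auto
  also have "card ({..<n}-{i0}) = n - 1" using i0 by simp
  finally show "trace_norm X \<le> sqrt (real (n - 1) * frob n X X)" unfolding tn fr .
qed




definition pmat :: "nat \<Rightarrow> (nat \<Rightarrow> nat) \<Rightarrow> real mat" where
  "pmat n \<sigma> = mat n n (\<lambda>(i,j). if i = \<sigma> j then 1 else 0)"

definition wmat :: "nat \<Rightarrow> (nat \<Rightarrow> nat) \<Rightarrow> (nat \<Rightarrow> nat \<Rightarrow> real) \<Rightarrow> real mat" where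
  "wmat n \<sigma> g = mat n n (\<lambda>(k,i). - g (inv_into {..<n} \<sigma> k) i)"

lemma pmat_ds:
  assumes b: "bij_betw \<sigma> {..<n} {..<n}"
  shows "pmat n \<sigma> \<in> doubly_stochastic n"
proof -
  have row: "(\<Sum>j<n. pmat n \<sigma> $$ (i, j)) = 1" if i: "i < n" for i
  proof -
    obtain j0 where j0: "j0 < n" "\<sigma> j0 = i" using b i by (metis bij_betw_iff_bijections lessThan_iff)
    have "(\<Sum>j<n. pmat n \<sigma> $$ (i, j)) = (\<Sum>j<n. if j = j0 then 1 else 0)"
    proof (intro sum.cong refl)
      fix j assume j: "j \<in> {..<n}"
      have "\<sigma> j = \<sigma> j0 \<longleftrightarrow> j = j0" using b j j0 by (metis bij_betw_iff_bijections lessThan_iff)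
      thus "pmat n \<sigma> $$ (i, j) = (if j = j0 then 1 else 0)" using i j j0 by (auto simp: pmat_def)
    qed
    also have "\<dots> = 1" using j0 by simp
    finally show ?thesis .
  qed
  have col: "(\<Sum>i<n. pmat n \<sigma> $$ (i, j)) = 1" if j: "j < n" for j
  proof -
    have sj: "\<sigma> j < n" using b j by (metis bij_betw_apply lessThan_iff)
    have "(\<Sum>i<n. pmat n \<sigma> $$ (i, j)) = (\<Sum>i<n. if i = \<sigma> j then 1 else 0)"
      by (intro sum.cong refl) (use j in \<open>auto simp: pmat_def\<close>)
    also have "\<dots> = 1" using sj by simp
    finally show ?thesis .
  qed
  show ?thesis unfolding doubly_stochastic_def using row col by (auto simp: pmat_def)
qed

lemma wmat_carrier: "wmat n \<sigma> g \<in> carrier_mat n n" by (simp add: wmat_def)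
lemma pmat_carrier: "pmat n \<sigma> \<in> carrier_mat n n" by (simp add: pmat_def)

lemma wmat_entry:
  assumes b: "bij_betw \<sigma> {..<n} {..<n}" and m: "m < n" and i: "i < n"
  shows "wmat n \<sigma> g $$ (\<sigma> m, i) = - g m i"
proof -
  have sm: "\<sigma> m < n" using b m by (metis bij_betw_apply lessThan_iff)
  have "inv_into {..<n} \<sigma> (\<sigma> m) = m" using b m by (simp add: bij_betw_def inv_into_f_f)
  thus ?thesis using sm i by (simp add: wmat_def)
qed

lemma sum_reindex_perm:
  assumes b: "bij_betw \<sigma> {..<n} {..<n}"
  shows "(\<Sum>k<n. F k) = (\<Sum>m<n. F (\<sigma> m) :: real)"
  using sum.reindex_bij_betw[OF b, of F] by simp

lemma wmat_orth:
  assumes b: "bij_betw \<sigma> {..<n} {..<n}"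
    and g: "\<And>i j. i < n \<Longrightarrow> j < n \<Longrightarrow> (\<Sum>m<n. g m i * g m j) = (if i = j then 1 else 0)"
  shows "transpose_mat (wmat n \<sigma> g) * wmat n \<sigma> g = 1\<^sub>m n"
proof (rule eq_matI)
  fix i j assume "i < dim_row (1\<^sub>m n)" "j < dim_col (1\<^sub>m n)"
  hence i: "i < n" and j: "j < n" by auto
  have "(transpose_mat (wmat n \<sigma> g) * wmat n \<sigma> g) $$ (i,j) = (\<Sum>k<n. wmat n \<sigma> g $$ (k,i) * wmat n \<sigma> g $$ (k,j))"
    using i j by (simp add: wmat_def scalar_prod_def atLeast0LessThan)
  also have "\<dots> = (\<Sum>m<n. wmat n \<sigma> g $$ (\<sigma> m,i) * wmat n \<sigma> g $$ (\<sigma> m,j))"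
    by (fact sum_reindex_perm[OF b, of "\<lambda>k. wmat n \<sigma> g $$ (k,i) * wmat n \<sigma> g $$ (k,j)"])
  also have "\<dots> = (\<Sum>m<n. g m i * g m j)"
    by (intro sum.cong refl) (simp add: wmat_entry[OF b _ i] wmat_entry[OF b _ j])
  finally show "(transpose_mat (wmat n \<sigma> g) * wmat n \<sigma> g) $$ (i,j) = 1\<^sub>m n $$ (i,j)"
    using g[OF i j] i j by simp
qed (auto simp: wmat_def)

lemma frob_reindex:
  assumes b: "bij_betw \<sigma> {..<n} {..<n}"
  shows "frob n W X = (\<Sum>m<n. \<Sum>i<n. W $$ (\<sigma> m, i) * X $$ (\<sigma> m, i))"
  unfolding frob_def using sum.reindex_bij_betw[OF b, of "\<lambda>k. \<Sum>i<n. W $$ (k,i) * X $$ (k,i)"] by simp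

lemma wmat_frob:
  assumes b: "bij_betw \<sigma> {..<n} {..<n}" and A: "A \<in> carrier_mat n n"
  shows "frob n (wmat n \<sigma> g) (A - pmat n \<sigma>) = (\<Sum>m<n. g m m) - (\<Sum>m<n. \<Sum>i<n. g m i * A $$ (\<sigma> m, i))"
proof -
  have inj: "\<sigma> m = \<sigma> i \<longleftrightarrow> m = i" if "m < n" "i < n" for m i
    using b that unfolding bij_betw_def inj_on_def by auto
  have "frob n (wmat n \<sigma> g) (A - pmat n \<sigma>) = (\<Sum>m<n. \<Sum>i<n. wmat n \<sigma> g $$ (\<sigma> m, i) * (A - pmat n \<sigma>) $$ (\<sigma> m, i))"
    by (rule frob_reindex[OF b])
  also have "\<dots> = (\<Sum>m<n. \<Sum>i<n. (- g m i) * (A $$ (\<sigma> m, i) - (if m = i then 1 else 0)))"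
  proof (rule sum.cong[OF refl], rule sum.cong[OF refl])
    fix m i assume m: "m \<in> {..<n}" and i: "i \<in> {..<n}"
    have sm: "\<sigma> m < n" using b m by (metis bij_betw_apply lessThan_iff)
    show "wmat n \<sigma> g $$ (\<sigma> m, i) * (A - pmat n \<sigma>) $$ (\<sigma> m, i) = (- g m i) * (A $$ (\<sigma> m, i) - (if m = i then 1 else 0))"
      using wmat_entry[OF b, of m i g] m i sm A inj[of m i] by (simp add: pmat_def)
  qed
  also have "\<dots> = (\<Sum>m<n. \<Sum>i<n. g m i * (if m = i then 1 else 0)) - (\<Sum>m<n. \<Sum>i<n. g m i * A $$ (\<sigma> m, i))"
    by (simp add: algebra_simps sum_subtractf)
  also have "(\<Sum>m<n. \<Sum>i<n. g m i * (if m = i then 1 else 0)) = (\<Sum>m<n. g m m)"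
    by (intro sum.cong refl) (simp add: if_distrib[of "\<lambda>x. _ * x"] cong: if_cong)
  finally show ?thesis .
qed




definition giv :: "nat \<Rightarrow> nat \<Rightarrow> real \<Rightarrow> real \<Rightarrow> nat \<Rightarrow> nat \<Rightarrow> real" where
  "giv p q c s m i = (if m = p then (if i = p then c else if i = q then - s else 0)
     else if m = q then (if i = p then s else if i = q then c else 0)
     else (if m = i then 1 else 0))"

lemma sum_split2:
  assumes "p < (n::nat)" "q < n" "p \<noteq> q"
  shows "(\<Sum>m<n. f m) = f p + f q + (\<Sum>m\<in>{..<n}-{p,q}. f m :: real)"
proof -
  have "(\<Sum>m<n. f m) = (\<Sum>m\<in>{..<n}-{p,q}. f m) + (\<Sum>m\<in>{p,q}. f m)"
    by (rule sum.subset_diff) (use assms in auto)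
  thus ?thesis using assms by simp
qed

lemma giv_orth:
  assumes pq: "p < n" "q < n" "p \<noteq> q" and cs: "c^2 + s^2 = 1" and ij: "i < n" "j < n"
  shows "(\<Sum>m<n. giv p q c s m i * giv p q c s m j) = (if i = j then 1 else 0)"
proof -
  have rest: "(\<Sum>m\<in>{..<n}-{p,q}. giv p q c s m i * giv p q c s m j) = (if i = j \<and> i \<noteq> p \<and> i \<noteq> q then 1 else 0)"
  proof -
    have "(\<Sum>m\<in>{..<n}-{p,q}. giv p q c s m i * giv p q c s m j) = (\<Sum>m\<in>{..<n}-{p,q}. if m = i then (if i = j then 1 else 0) else 0)"
      by (intro sum.cong refl) (auto simp: giv_def)
    also have "\<dots> = (if i = j \<and> i \<noteq> p \<and> i \<noteq> q then 1 else 0)"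
      using ij by (simp add: sum.delta')
    finally show ?thesis .
  qed
  show ?thesis unfolding sum_split2[OF pq] rest using pq cs
    by (auto simp: giv_def power2_eq_square algebra_simps)
qed

lemma giv_trace:
  assumes pq: "p < n" "q < n" "p \<noteq> q"
  shows "(\<Sum>m<n. giv p q c s m m) = real n - 2 + 2 * c"
proof -
  have "(\<Sum>m\<in>{..<n}-{p,q}. giv p q c s m m) = (\<Sum>m\<in>{..<n}-{p,q}. 1)"
    by (intro sum.cong refl) (auto simp: giv_def)
  also have "\<dots> = real n - 2" using pq by (simp add: card_Diff_subset)
  finally show ?thesis unfolding sum_split2[OF pq] using pq by (simp add: giv_def)
qed

lemma giv_value:
  assumes pq: "p < n" "q < n" "p \<noteq> q"
  shows "(\<Sum>m<n. \<Sum>i<n. giv p q c s m i * F m i) =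
     (\<Sum>m<n. F m m) + (c - 1) * (F p p + F q q) - s * F p q + s * F q p"
proof -
  have rowp: "(\<Sum>i<n. giv p q c s p i * F p i) = c * F p p - s * F p q"
  proof -
    have "(\<Sum>i\<in>{..<n}-{p,q}. giv p q c s p i * F p i) = 0" by (intro sum.neutral) (auto simp: giv_def)
    thus ?thesis unfolding sum_split2[OF pq] using pq by (simp add: giv_def)
  qed
  have rowq: "(\<Sum>i<n. giv p q c s q i * F q i) = s * F q p + c * F q q"
  proof -
    have "(\<Sum>i\<in>{..<n}-{p,q}. giv p q c s q i * F q i) = 0" by (intro sum.neutral) (auto simp: giv_def)
    thus ?thesis unfolding sum_split2[OF pq] using pq by (simp add: giv_def)
  qed
  have rowm: "(\<Sum>i<n. giv p q c s m i * F m i) = F m m" if "m \<in> {..<n}-{p,q}" for m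
  proof -
    have "(\<Sum>i<n. giv p q c s m i * F m i) = (\<Sum>i<n. if i = m then F m m else 0)"
      by (intro sum.cong refl) (use that in \<open>auto simp: giv_def\<close>)
    thus ?thesis using that by simp
  qed
  have "(\<Sum>m<n. \<Sum>i<n. giv p q c s m i * F m i) = (c * F p p - s * F p q) + (s * F q p + c * F q q) + (\<Sum>m\<in>{..<n}-{p,q}. F m m)"
    unfolding sum_split2[OF pq, of "\<lambda>m. \<Sum>i<n. giv p q c s m i * F m i"] rowp rowq
    by (simp add: rowm)
  also have "(\<Sum>m\<in>{..<n}-{p,q}. F m m) = (\<Sum>m<n. F m m) - F p p - F q q"
    unfolding sum_split2[OF pq, of "\<lambda>m. F m m"] by simp
  finally show ?thesis by (simp add: algebra_simps)
qed

lemma delta_sum: "i < (n::nat) \<Longrightarrow> (\<Sum>m<n. (if m = i then 1 else 0)) = (1::real)"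
  by simp

lemma delta_orth: "i < (n::nat) \<Longrightarrow> j < n \<Longrightarrow> (\<Sum>m<n. (if m = i then 1 else 0) * (if m = j then 1 else 0)) = (if i = j then 1 else (0::real))"
proof -
  assume i: "i < n"
  have "(\<Sum>m<n. (if m = i then 1 else 0) * (if m = j then 1 else 0)) = (\<Sum>m<n. if m = i then (if i = j then 1 else (0::real)) else 0)"
    by (intro sum.cong refl) auto
  thus ?thesis using i by simp
qed

lemma g2_orth:
  assumes n: "n > 0" and ij: "i < n" "j < n"
  shows "(\<Sum>m<n. ((if m = i then 1 else 0) - 2 / real n) * ((if m = j then 1 else 0) - 2 / real n)) = (if i = j then 1 else (0::real))"
proof -
  have "(\<Sum>m<n. ((if m = i then 1 else 0) - 2 / real n) * ((if m = j then 1 else 0) - 2 / real n))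
     = (\<Sum>m<n. (if m = i then 1 else 0) * (if m = j then 1 else 0) - (2 / real n) * (if m = i then 1 else 0)
       - (2 / real n) * (if m = j then 1 else 0) + 4 / (real n)^2)"
    by (intro sum.cong refl) (simp add: algebra_simps power2_eq_square)
  also have "\<dots> = (\<Sum>m<n. (if m = i then 1 else 0) * (if m = j then 1 else 0)) - 2 / real n * (\<Sum>m<n. (if m = i then 1 else 0))
       - 2 / real n * (\<Sum>m<n. (if m = j then 1 else 0)) + (\<Sum>m<n. 4 / (real n)^2)"
    by (simp only: sum_subtractf sum.distrib sum_distrib_left)
  also have "\<dots> = (if i = j then 1 else 0) - 4 / real n + 4 / real n"
    using ij n by (simp only: delta_orth delta_sum) (simp add: power2_eq_square)
  finally show ?thesis by simp
qed




lemma shift_bij: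
  assumes n: "n > 0"
  shows "bij_betw (\<lambda>x. (x + k) mod n) {..<n} {..<(n::nat)}"
proof -
  have img: "(\<lambda>x. (x + k) mod n) ` {..<n} = {..<n}"
  proof
    show "(\<lambda>x. (x + k) mod n) ` {..<n} \<subseteq> {..<n}" using n by auto
    show "{..<n} \<subseteq> (\<lambda>x. (x + k) mod n) ` {..<n}"
    proof
      fix y assume y: "y \<in> {..<n}"
      define x where "x = (y + (n - k mod n)) mod n"
      have "(x + k) mod n = (y + (n - k mod n) + k) mod n" unfolding x_def by (simp add: mod_add_left_eq)
      also have "\<dots> = (y + (n - k mod n) + k mod n) mod n" by (simp add: mod_add_right_eq)
      also have "y + (n - k mod n) + k mod n = y + n" using mod_less_divisor[OF n, of k] by arith
      also have "(y + n) mod n = y" using y by simp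
      finally have "(x + k) mod n = y" .
      moreover have "x < n" unfolding x_def using n by simp
      ultimately show "y \<in> (\<lambda>x. (x + k) mod n) ` {..<n}" by force
    qed
  qed
  have "inj_on (\<lambda>x. (x + k) mod n) {..<n}"
    by (rule eq_card_imp_inj_on) (simp_all add: img)
  thus ?thesis using img unfolding bij_betw_def by simp
qed

definition ptr :: "nat \<Rightarrow> real mat \<Rightarrow> (nat \<Rightarrow> nat) \<Rightarrow> real" where
  "ptr n A \<sigma> = (\<Sum>m<n. A $$ (\<sigma> m, m))"

definition msum :: "nat \<Rightarrow> real mat \<Rightarrow> real" where
  "msum n A = (\<Sum>i<n. \<Sum>j<n. A $$ (i,j))"

lemma cyc_bij:
  fixes \<sigma> :: "nat \<Rightarrow> nat"
  assumes n: "n > 0" and b: "bij_betw \<sigma> {..<n} {..<n}"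
  shows "bij_betw (\<lambda>m. (\<sigma> m + k) mod n) {..<n} {..<n}"
  using bij_betw_trans[OF b shift_bij[OF n, of k]] by (simp add: comp_def)

lemma cyc_sum:
  assumes n: "n > 0" and b: "bij_betw \<sigma> {..<n} {..<n}"
  shows "(\<Sum>k<n. ptr n A (\<lambda>m. (\<sigma> m + k) mod n)) = msum n A"
proof -
  have "(\<Sum>k<n. ptr n A (\<lambda>m. (\<sigma> m + k) mod n)) = (\<Sum>m<n. \<Sum>k<n. A $$ ((\<sigma> m + k) mod n, m))"
    unfolding ptr_def by (rule sum.swap)
  also have "\<dots> = (\<Sum>m<n. \<Sum>i<n. A $$ (i, m))"
  proof (rule sum.cong[OF refl])
    fix m assume m: "m \<in> {..<n}"
    have bb: "bij_betw (\<lambda>k. (\<sigma> m + k) mod n) {..<n} {..<n}"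
      using shift_bij[OF n, of "\<sigma> m"] by (simp add: add.commute)
    show "(\<Sum>k<n. A $$ ((\<sigma> m + k) mod n, m)) = (\<Sum>i<n. A $$ (i, m))"
      using sum.reindex_bij_betw[OF bb, of "\<lambda>i. A $$ (i, m)"] by simp
  qed
  also have "\<dots> = msum n A" unfolding msum_def by (rule sum.swap)
  finally show ?thesis .
qed

definition sw :: "nat \<Rightarrow> nat \<Rightarrow> nat \<Rightarrow> nat" where
  "sw a b x = (if x = a then b else if x = b then a else x)"

lemma sw_bij:
  assumes "a < n" "b < n"
  shows "bij_betw (sw a b) {..<n} {..<n}"
  by (rule bij_betw_byWitness[of _ "sw a b"]) (use assms in \<open>auto simp: sw_def\<close>)

lemma perm_two:
  fixes i k j l n :: nat
  assumes ik: "i \<noteq> k" and jl: "j \<noteq> l" and lt: "i < n" "k < n" "j < n" "l < n"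
  shows "\<exists>\<sigma>. bij_betw \<sigma> {..<n} {..<n} \<and> \<sigma> j = i \<and> \<sigma> l = k"
proof -
  define l' where "l' = sw j i l"
  have l'n: "l' < n" using lt by (auto simp: l'_def sw_def)
  have l'i: "l' \<noteq> i" using jl ik by (auto simp: l'_def sw_def)
  define \<sigma> where "\<sigma> = sw l' k \<circ> sw j i"
  have "bij_betw \<sigma> {..<n} {..<n}" unfolding \<sigma>_def
    by (rule bij_betw_trans[OF sw_bij sw_bij]) (use lt l'n in auto)
  moreover have "\<sigma> j = i" using l'i ik by (auto simp: \<sigma>_def sw_def)
  moreover have "\<sigma> l = k" by (auto simp: \<sigma>_def l'_def sw_def)
  ultimately show ?thesis by blast
qed




lemma test_val:
  assumes A: "A \<in> carrier_mat n n" and b: "bij_betw \<sigma> {..<n} {..<n}"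
    and g: "\<And>i j. i < n \<Longrightarrow> j < n \<Longrightarrow> (\<Sum>m<n. g m i * g m j) = (if i = j then 1 else 0)"
  shows "\<exists>B\<in>doubly_stochastic n. (\<Sum>m<n. g m m) - (\<Sum>m<n. \<Sum>i<n. g m i * A $$ (\<sigma> m, i)) \<le> trace_norm (A - B)"
proof -
  have "frob n (wmat n \<sigma> g) (A - pmat n \<sigma>) \<le> trace_norm (A - pmat n \<sigma>)"
    by (rule duality[OF wmat_carrier minus_carrier_mat[OF pmat_carrier] wmat_orth[OF b g]])
  thus ?thesis using wmat_frob[OF b A, of g] pmat_ds[OF b] by auto
qed

lemma val1:
  assumes A: "A \<in> carrier_mat n n" and b: "bij_betw \<sigma> {..<n} {..<n}"
  shows "\<exists>B\<in>doubly_stochastic n. real n - ptr n A \<sigma> \<le> trace_norm (A - B)"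
proof -
  let ?g = "\<lambda>m i. if m = i then 1 else (0::real)"
  have e1: "(\<Sum>m<n. ?g m m) = real n" by simp
  have e2: "(\<Sum>m<n. \<Sum>i<n. ?g m i * A $$ (\<sigma> m, i)) = ptr n A \<sigma>"
    unfolding ptr_def by (intro sum.cong refl) (simp add: if_distrib[of "\<lambda>x. x * _"] cong: if_cong)
  have go: "\<And>i j. i < n \<Longrightarrow> j < n \<Longrightarrow> (\<Sum>m<n. ?g m i * ?g m j) = (if i = j then 1 else 0)"
    by (rule delta_orth)
  obtain B where B: "B \<in> doubly_stochastic n"
    and le: "(\<Sum>m<n. ?g m m) - (\<Sum>m<n. \<Sum>i<n. ?g m i * A $$ (\<sigma> m, i)) \<le> trace_norm (A - B)"
    using test_val[OF A b go] by blast
  show ?thesis using B le unfolding e1 e2 by blast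
qed

lemma val2:
  assumes A: "A \<in> carrier_mat n n" and b: "bij_betw \<sigma> {..<n} {..<n}" and n: "n > 0"
  shows "\<exists>B\<in>doubly_stochastic n. real n - 2 - ptr n A \<sigma> + 2 * msum n A / real n \<le> trace_norm (A - B)"
proof -
  let ?g = "\<lambda>m i. (if m = i then 1 else 0) - 2 / real n"
  have e1: "(\<Sum>m<n. ?g m m) = real n - 2" using n by (simp add: sum_subtractf field_simps)
  have e2: "(\<Sum>m<n. \<Sum>i<n. ?g m i * A $$ (\<sigma> m, i)) = ptr n A \<sigma> - 2 / real n * msum n A"
  proof -
    have "(\<Sum>m<n. \<Sum>i<n. ?g m i * A $$ (\<sigma> m, i)) = (\<Sum>m<n. A $$ (\<sigma> m, m) - 2 / real n * (\<Sum>i<n. A $$ (\<sigma> m, i)))"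
      by (intro sum.cong refl) (simp add: algebra_simps sum_subtractf sum_distrib_left if_distrib[of "\<lambda>x. x * _"] cong: if_cong)
    also have "\<dots> = ptr n A \<sigma> - 2 / real n * (\<Sum>m<n. \<Sum>i<n. A $$ (\<sigma> m, i))"
      unfolding ptr_def by (simp add: sum_subtractf sum_distrib_left)
    also have "(\<Sum>m<n. \<Sum>i<n. A $$ (\<sigma> m, i)) = msum n A"
      unfolding msum_def using sum.reindex_bij_betw[OF b, of "\<lambda>k. \<Sum>i<n. A $$ (k, i)"] by simp
    finally show ?thesis .
  qed
  have go: "\<And>i j. i < n \<Longrightarrow> j < n \<Longrightarrow> (\<Sum>m<n. ?g m i * ?g m j) = (if i = j then 1 else 0)"
    by (rule g2_orth[OF n])
  obtain B where B: "B \<in> doubly_stochastic n"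
    and le: "(\<Sum>m<n. ?g m m) - (\<Sum>m<n. \<Sum>i<n. ?g m i * A $$ (\<sigma> m, i)) \<le> trace_norm (A - B)"
    using test_val[OF A b go] by blast
  have "real n - 2 - ptr n A \<sigma> + 2 * msum n A / real n = (\<Sum>m<n. ?g m m) - (\<Sum>m<n. \<Sum>i<n. ?g m i * A $$ (\<sigma> m, i))"
    unfolding e1 e2 by simp
  thus ?thesis using B le by auto
qed

lemma val3:
  assumes A: "A \<in> carrier_mat n n" and b: "bij_betw \<sigma> {..<n} {..<n}"
    and pq: "p < n" "q < n" "p \<noteq> q" and cs: "c^2 + s^2 = 1"
  shows "\<exists>B\<in>doubly_stochastic n. real n - 2 + 2 * c - (ptr n A \<sigma> + (c - 1) * (A $$ (\<sigma> p, p) + A $$ (\<sigma> q, q))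
     - s * A $$ (\<sigma> p, q) + s * A $$ (\<sigma> q, p)) \<le> trace_norm (A - B)"
proof -
  have "\<exists>B\<in>doubly_stochastic n. (\<Sum>m<n. giv p q c s m m) - (\<Sum>m<n. \<Sum>i<n. giv p q c s m i * A $$ (\<sigma> m, i)) \<le> trace_norm (A - B)"
    by (rule test_val[OF A b giv_orth[OF pq cs]])
  thus ?thesis unfolding giv_trace[OF pq] giv_value[OF pq, of _ _ "\<lambda>m i. A $$ (\<sigma> m, i)"] ptr_def .
qed

lemma givens_gain:
  fixes K D :: real
  assumes D: "D \<noteq> 0"
  shows "\<exists>c s. c^2 + s^2 = 1 \<and> (c - 1) * (2 - K) + s * D > 0"
proof -
  define a where "a = \<bar>2 - K\<bar> + 1"
  have a: "a > 0" "a - (2 - K) > 0" unfolding a_def by auto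
  define t where "t = D / a"
  have t0: "1 + t^2 > 0" by (simp add: add_pos_nonneg)
  define c where "c = (1 - t^2) / (1 + t^2)"
  define s where "s = 2 * t / (1 + t^2)"
  have "c^2 + s^2 = ((1 - t^2)^2 + (2*t)^2) / (1 + t^2)^2"
    unfolding c_def s_def by (simp add: power_divide add_divide_distrib)
  also have "(1 - t^2)^2 + (2*t)^2 = (1 + t^2)^2" by (simp add: power2_eq_square algebra_simps)
  finally have cs: "c^2 + s^2 = 1" using t0 by simp
  have c1: "c - 1 = - 2 * t^2 / (1 + t^2)" unfolding c_def using t0 by (simp add: field_simps)
  have "(c - 1) * (2 - K) + s * D = (- 2 * t^2 * (2 - K) + 2 * t * D) / (1 + t^2)"
    unfolding c1 s_def using t0 by (simp add: add_divide_distrib diff_divide_distrib)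
  also have "\<dots> = (2 * t * (D - t * (2 - K))) / (1 + t^2)"
    by (simp add: algebra_simps power2_eq_square)
  also have "2 * t * (D - t * (2 - K)) = 2 * D^2 * (a - (2 - K)) / a^2"
    unfolding t_def using a by (simp add: field_simps power2_eq_square)
  finally have eq: "(c - 1) * (2 - K) + s * D = 2 * D^2 * (a - (2 - K)) / a^2 / (1 + t^2)" .
  have "2 * D^2 * (a - (2 - K)) / a^2 / (1 + t^2) > 0"
    using D a t0 by (intro divide_pos_pos mult_pos_pos) auto
  thus ?thesis using cs eq by metis
qed




lemma id_bij: "bij_betw (\<lambda>m::nat. m) {..<n} {..<n}" by (simp add: bij_betw_def)

lemma lower_strict:
  assumes n: "n \<ge> 1" and A: "A \<in> carrier_mat n n" and AJ: "A \<noteq> Jmat n"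
  shows "\<exists>B\<in>doubly_stochastic n. trace_norm (A - B) > real n - 1"
proof (rule ccontr)
  assume "\<not> ?thesis"
  hence le: "\<And>B. B \<in> doubly_stochastic n \<Longrightarrow> trace_norm (A - B) \<le> real n - 1" by force
  have n0: "n > 0" using n by simp
  have P1: "ptr n A \<sigma> \<ge> 1" if b: "bij_betw \<sigma> {..<n} {..<n}" for \<sigma>
  proof -
    obtain B where "B \<in> doubly_stochastic n" "real n - ptr n A \<sigma> \<le> trace_norm (A - B)"
      using val1[OF A b] by blast
    thus ?thesis using le by fastforce
  qed
  let ?s = "msum n A"
  have P2: "ptr n A \<sigma> \<ge> 2 * ?s / real n - 1" if b: "bij_betw \<sigma> {..<n} {..<n}" for \<sigma>
  proof -
    obtain B where "B \<in> doubly_stochastic n" "real n - 2 - ptr n A \<sigma> + 2 * ?s / real n \<le> trace_norm (A - B)"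
      using val2[OF A b n0] by blast
    thus ?thesis using le by fastforce
  qed
  have s_le: "?s \<le> real n"
  proof -
    have "?s = (\<Sum>k<n. ptr n A (\<lambda>m. ((\<lambda>m. m) m + k) mod n))" using cyc_sum[OF n0 id_bij] by simp
    also have "\<dots> \<ge> (\<Sum>k<n. 2 * ?s / real n - 1)"
      by (intro sum_mono P2 cyc_bij[OF n0 id_bij])
    also have "(\<Sum>k<n. 2 * ?s / real n - 1) = 2 * ?s - real n" using n0 by (simp add: field_simps)
    finally show ?thesis by simp
  qed
  have P3: "ptr n A \<sigma> = 1" if b: "bij_betw \<sigma> {..<n} {..<n}" for \<sigma>
  proof -
    let ?t = "\<lambda>k. ptr n A (\<lambda>m. (\<sigma> m + k) mod n) - 1"
    have nn: "\<forall>k\<in>{..<n}. ?t k \<ge> 0" using P1[OF cyc_bij[OF n0 b]] by simp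
    have "(\<Sum>k<n. ?t k) = ?s - real n" using cyc_sum[OF n0 b, of A] by (simp add: sum_subtractf)
    hence "(\<Sum>k<n. ?t k) \<le> 0" using s_le by simp
    moreover have "(\<Sum>k<n. ?t k) \<ge> 0" by (rule sum_nonneg) (use nn in auto)
    ultimately have "(\<Sum>k<n. ?t k) = 0" by linarith
    hence "\<forall>k\<in>{..<n}. ?t k = 0" using sum_nonneg_eq_0_iff[of "{..<n}" ?t] nn by simp
    hence "?t 0 = 0" using n0 by blast
    moreover have "ptr n A (\<lambda>m. (\<sigma> m + 0) mod n) = ptr n A \<sigma>"
      unfolding ptr_def
    proof (intro sum.cong refl)
      fix m assume "m \<in> {..<n}"
      hence "\<sigma> m < n" using b by (auto simp: bij_betw_def)
      thus "A $$ ((\<sigma> m + 0) mod n, m) = A $$ (\<sigma> m, m)" by simp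
    qed
    ultimately show ?thesis by simp
  qed
  have P4: "A $$ (\<sigma> p, q) = A $$ (\<sigma> q, p)"
    if b: "bij_betw \<sigma> {..<n} {..<n}" and pq: "p < n" "q < n" "p \<noteq> q" for \<sigma> p q
  proof (rule ccontr)
    assume ne: "A $$ (\<sigma> p, q) \<noteq> A $$ (\<sigma> q, p)"
    let ?K = "A $$ (\<sigma> p, p) + A $$ (\<sigma> q, q)"
    let ?D = "A $$ (\<sigma> p, q) - A $$ (\<sigma> q, p)"
    obtain c s where cs: "c^2 + s^2 = 1" and gain: "(c - 1) * (2 - ?K) + s * ?D > 0"
      using givens_gain[of ?D ?K] ne by auto
    obtain B where B: "B \<in> doubly_stochastic n"
      and v: "real n - 2 + 2 * c - (ptr n A \<sigma> + (c - 1) * ?K - s * A $$ (\<sigma> p, q) + s * A $$ (\<sigma> q, p)) \<le> trace_norm (A - B)"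
      using val3[OF A b pq cs] by blast
    have "real n - 2 + 2 * c - (ptr n A \<sigma> + (c - 1) * ?K - s * A $$ (\<sigma> p, q) + s * A $$ (\<sigma> q, p))
        = real n - 1 + ((c - 1) * (2 - ?K) + s * ?D)"
      using P3[OF b] by (simp add: algebra_simps)
    thus False using v le[OF B] gain by linarith
  qed
  have P5: "A $$ (i, l) = A $$ (k, j)"
    if h: "i \<noteq> k" "j \<noteq> l" "i < n" "k < n" "j < n" "l < n" for i k j l
  proof -
    obtain \<sigma> where b: "bij_betw \<sigma> {..<n} {..<n}" and s: "\<sigma> j = i" "\<sigma> l = k"
      using perm_two[OF h] by blast
    show ?thesis using P4[OF b, of j l] h s by simp
  qed
  have allJ: "A $$ (x, y) = 1 / real n" if xy: "x < n" "y < n" for x y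
  proof (cases "n = 1")
    case True
    hence "x = 0" "y = 0" using xy by auto
    moreover have "ptr n A (\<lambda>m. m) = A $$ (0, 0)" using True by (simp add: ptr_def)
    ultimately show ?thesis using P3[OF id_bij] True by simp
  next
    case False
    show ?thesis
    proof (cases "n = 2")
      case True
      have a1: "A $$ (0, 0) = A $$ (1, 1)" by (rule P5) (use True in auto)
      have a2: "A $$ (0, 1) = A $$ (1, 0)" by (rule P5) (use True in auto)
      have p1: "A $$ (0, 0) + A $$ (1, 1) = 1" using P3[OF id_bij] True by (simp add: ptr_def numeral_2_eq_2)
      have b01: "bij_betw (sw 0 1) {..<n} {..<n}" using sw_bij[of 0 n 1] True by simp
      have p2: "A $$ (1, 0) + A $$ (0, 1) = 1" using P3[OF b01] True by (simp add: ptr_def numeral_2_eq_2 sw_def)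
      have h00: "A $$ (0, 0) = 1/2" "A $$ (1, 1) = 1/2" using a1 p1 by linarith+
      have h01: "A $$ (0, 1) = 1/2" "A $$ (1, 0) = 1/2" using a2 p2 by linarith+
      have "x = 0 \<or> x = 1" "y = 0 \<or> y = 1" using xy True by auto
      thus ?thesis using h00 h01 True by (elim disjE) simp_all
    next
      case False
      hence n3: "n \<ge> 3" using \<open>n \<noteq> 1\<close> n by simp
      have const: "A $$ (x, y) = A $$ (0, 0)" if "x < n" "y < n" for x y
      proof -
        define z where "z = (if x = 1 then 2 else (1::nat))"
        define w where "w = (if y = 1 then 2 else (1::nat))"
        have zw: "z < n" "w < n" "z \<noteq> x" "z \<noteq> 0" "w \<noteq> y" "w \<noteq> 0" using n3 by (auto simp: z_def w_def)
        have "A $$ (x, y) = A $$ (z, w)" by (rule P5) (use zw that in auto)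
        moreover have "A $$ (0, 0) = A $$ (z, w)" by (rule P5) (use zw n3 in auto)
        ultimately show ?thesis by simp
      qed
      have "ptr n A (\<lambda>m. m) = (\<Sum>m<n. A $$ (0, 0))" unfolding ptr_def
      proof (intro sum.cong refl)
        fix m assume "m \<in> {..<n}"
        thus "A $$ (m, m) = A $$ (0, 0)" using const by blast
      qed
      hence "ptr n A (\<lambda>m. m) = real n * A $$ (0, 0)" by simp
      hence "A $$ (0, 0) = 1 / real n" using P3[OF id_bij] n0 by (simp add: field_simps)
      thus ?thesis using const[OF xy] by simp
    qed
  qed
  have "A = Jmat n" by (rule eq_matI) (use A allJ in \<open>auto simp: Jmat_def\<close>)
  thus False using AJ by simp
qed




lemma ds_entries:
  assumes B: "B \<in> doubly_stochastic n" and ij: "i < n" "j < n"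
  shows "0 \<le> B $$ (i,j)" "B $$ (i,j) \<le> 1"
proof -
  show "0 \<le> B $$ (i,j)" using B ij by (auto simp: doubly_stochastic_def)
  have "B $$ (i,j) \<le> (\<Sum>j<n. B $$ (i,j))"
    by (rule member_le_sum) (use B ij in \<open>auto simp: doubly_stochastic_def\<close>)
  thus "B $$ (i,j) \<le> 1" using B ij by (auto simp: doubly_stochastic_def)
qed

lemma ds_carrier: "B \<in> doubly_stochastic n \<Longrightarrow> B \<in> carrier_mat n n"
  by (simp add: doubly_stochastic_def)

lemma J_upper:
  assumes n: "n \<ge> 1" and B: "B \<in> doubly_stochastic n"
  shows "trace_norm (Jmat n - B) \<le> real n - 1"
proof -
  have Bc: "B \<in> carrier_mat n n" using ds_carrier[OF B] .
  have J: "Jmat n \<in> carrier_mat n n" by (simp add: Jmat_def)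
  have X: "Jmat n - B \<in> carrier_mat n n" using minus_carrier_mat[OF Bc] .
  have n0: "real n > 0" using n by simp
  define v :: "real vec" where "v = vec n (\<lambda>_. 1)"
  have v: "v \<in> carrier_vec n" unfolding v_def by simp
  have v0: "v \<noteq> 0\<^sub>v n"
  proof
    assume "v = 0\<^sub>v n"
    hence "v $ 0 = 0" using n by simp
    thus False using n by (simp add: v_def)
  qed
  have rs: "(\<Sum>j<n. B $$ (i,j)) = 1" if "i < n" for i using B that by (auto simp: doubly_stochastic_def)
  have Xv: "(Jmat n - B) *\<^sub>v v = 0\<^sub>v n"
  proof (rule eq_vecI)
    fix i assume "i < dim_vec (0\<^sub>v n :: real vec)"
    hence i: "i < n" by simp
    have "((Jmat n - B) *\<^sub>v v) $ i = (\<Sum>j<n. 1 / real n - B $$ (i,j))"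
      using i Bc by (simp add: v_def Jmat_def scalar_prod_def atLeast0LessThan)
    also have "\<dots> = 0" using rs[OF i] n0 by (simp add: sum_subtractf)
    finally show "((Jmat n - B) *\<^sub>v v) $ i = 0\<^sub>v n $ i" using i by simp
  qed (use Bc in simp)
  have row: "(\<Sum>i<n. ((Jmat n - B) $$ (k,i)) * ((Jmat n - B) $$ (k,i))) \<le> 1 - 1 / real n" if k: "k < n" for k
  proof -
    have "(\<Sum>i<n. ((Jmat n - B) $$ (k,i)) * ((Jmat n - B) $$ (k,i)))
        = (\<Sum>i<n. 1 / (real n)^2 - 2 / real n * B $$ (k,i) + (B $$ (k,i))^2)"
      by (intro sum.cong refl) (use k Bc in \<open>simp add: Jmat_def power2_eq_square algebra_simps\<close>)
    also have "\<dots> = (\<Sum>i<n. 1 / (real n)^2) - (\<Sum>i<n. 2 / real n * B $$ (k,i)) + (\<Sum>i<n. (B $$ (k,i))^2)"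
      by (simp only: sum.distrib sum_subtractf)
    also have "(\<Sum>i<n. 2 / real n * B $$ (k,i)) = 2 / real n"
      unfolding sum_distrib_left[symmetric] using rs[OF k] by simp
    also have "(\<Sum>i<n. 1 / (real n)^2) = 1 / real n" using n0 by (simp add: power2_eq_square)
    also have "(\<Sum>i<n. (B $$ (k,i))^2) \<le> (\<Sum>i<n. B $$ (k,i))"
    proof (rule sum_mono)
      fix i assume "i \<in> {..<n}"
      hence "0 \<le> B $$ (k,i)" "B $$ (k,i) \<le> 1" using ds_entries[OF B k] by auto
      thus "(B $$ (k,i))^2 \<le> B $$ (k,i)" by (simp add: power2_eq_square mult_left_le)
    qed
    finally show ?thesis using rs[OF k] by simp
  qed
  have fr: "frob n (Jmat n - B) (Jmat n - B) \<le> real n - 1"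
  proof -
    have "frob n (Jmat n - B) (Jmat n - B) \<le> (\<Sum>k<n. 1 - 1 / real n)"
      unfolding frob_def by (intro sum_mono row) simp
    also have "\<dots> = real n - 1" using n0 by (simp add: field_simps)
    finally show ?thesis .
  qed
  have "trace_norm (Jmat n - B) \<le> sqrt (real (n - 1) * frob n (Jmat n - B) (Jmat n - B))"
    by (rule tn_bound(2)[OF X v v0 Xv])
  also have "\<dots> \<le> sqrt ((real n - 1) * (real n - 1))"
  proof (intro real_sqrt_le_mono)
    have "real (n - 1) = real n - 1" using n by (simp add: of_nat_diff)
    moreover have "real n - 1 \<ge> 0" using n by simp
    ultimately show "real (n - 1) * frob n (Jmat n - B) (Jmat n - B) \<le> (real n - 1) * (real n - 1)"
      using fr by (simp add: mult_left_mono)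
  qed
  also have "\<dots> = real n - 1" using n by simp
  finally show ?thesis .
qed

lemma tn_bdd:
  assumes A: "A \<in> carrier_mat n n" and B: "B \<in> doubly_stochastic n"
  shows "trace_norm (A - B) \<le> sqrt (real n * (\<Sum>k<n. \<Sum>i<n. (\<bar>A $$ (k,i)\<bar> + 1)^2))"
proof -
  have Bc: "B \<in> carrier_mat n n" using ds_carrier[OF B] .
  have X: "A - B \<in> carrier_mat n n" using minus_carrier_mat[OF Bc] .
  have "frob n (A - B) (A - B) \<le> (\<Sum>k<n. \<Sum>i<n. (\<bar>A $$ (k,i)\<bar> + 1)^2)"
    unfolding frob_def
  proof (intro sum_mono)
    fix k i assume k: "k \<in> {..<n}" and i: "i \<in> {..<n}"
    have b: "0 \<le> B $$ (k,i)" "B $$ (k,i) \<le> 1" using ds_entries[OF B] k i by auto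
    have "\<bar>A $$ (k,i) - B $$ (k,i)\<bar> \<le> \<bar>A $$ (k,i)\<bar> + 1" using b by linarith
    hence "(A $$ (k,i) - B $$ (k,i))^2 \<le> (\<bar>A $$ (k,i)\<bar> + 1)^2"
      by (metis abs_ge_zero power2_abs power_mono)
    thus "(A - B) $$ (k,i) * (A - B) $$ (k,i) \<le> (\<bar>A $$ (k,i)\<bar> + 1)^2"
      using k i A Bc by (simp add: power2_eq_square)
  qed
  hence "sqrt (real n * frob n (A - B) (A - B)) \<le> sqrt (real n * (\<Sum>k<n. \<Sum>i<n. (\<bar>A $$ (k,i)\<bar> + 1)^2))"
    by (intro real_sqrt_le_mono mult_left_mono) auto
  thus ?thesis using tn_bound(1)[OF X] by linarith
qed




theorem mainTheorem8:
  fixes n :: nat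
  assumes "n \<ge> 1"
  shows "(\<forall>A\<in>carrier_mat n n. cheb_dist n (Jmat n) \<le> cheb_dist n A
            \<and> (cheb_dist n A = cheb_dist n (Jmat n) \<longrightarrow> A = Jmat n))
         \<and> (INF A\<in>carrier_mat n n. cheb_dist n A) = real n - 1"
proof -
  have n: "n \<ge> 1" by fact
  have J: "Jmat n \<in> carrier_mat n n" by (simp add: Jmat_def)
  have ne: "doubly_stochastic n \<noteq> {}" using pmat_ds[OF id_bij] by blast
  have bdd: "bdd_above ((\<lambda>B. trace_norm (A - B)) ` doubly_stochastic n)" if A: "A \<in> carrier_mat n n" for A
    using tn_bdd[OF A] by (intro bdd_aboveI2) blast
  have geB: "trace_norm (A - B) \<le> cheb_dist n A" if A: "A \<in> carrier_mat n n" and B: "B \<in> doubly_stochastic n" for A B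
    unfolding cheb_dist_def by (rule cSUP_upper[OF B bdd[OF A]])
  have cJ: "cheb_dist n (Jmat n) = real n - 1"
  proof (rule antisym)
    show "cheb_dist n (Jmat n) \<le> real n - 1"
      unfolding cheb_dist_def by (rule cSUP_least[OF ne]) (rule J_upper[OF n])
    have "ptr n (Jmat n) (\<lambda>m. m) = 1" using n by (simp add: ptr_def Jmat_def)
    then obtain B where B: "B \<in> doubly_stochastic n" and le: "real n - 1 \<le> trace_norm (Jmat n - B)"
      using val1[OF J id_bij] by auto
    show "real n - 1 \<le> cheb_dist n (Jmat n)" using le geB[OF J B] by linarith
  qed
  have gt: "cheb_dist n A > real n - 1" if A: "A \<in> carrier_mat n n" and AJ: "A \<noteq> Jmat n" for A
  proof -
    obtain B where B: "B \<in> doubly_stochastic n" and g: "trace_norm (A - B) > real n - 1"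
      using lower_strict[OF n A AJ] by blast
    thus ?thesis using geB[OF A B] by linarith
  qed
  have ge: "cheb_dist n A \<ge> real n - 1" if A: "A \<in> carrier_mat n n" for A
    using gt[OF A] cJ by (cases "A = Jmat n") auto
  have part1: "\<forall>A\<in>carrier_mat n n. cheb_dist n (Jmat n) \<le> cheb_dist n A
            \<and> (cheb_dist n A = cheb_dist n (Jmat n) \<longrightarrow> A = Jmat n)"
    using ge gt cJ by force
  have part2: "(INF A\<in>carrier_mat n n. cheb_dist n A) = real n - 1"
  proof (rule antisym)
    have "bdd_below ((\<lambda>A. cheb_dist n A) ` carrier_mat n n)"
      using ge by (intro bdd_belowI2) blast
    hence "(INF A\<in>carrier_mat n n. cheb_dist n A) \<le> cheb_dist n (Jmat n)"
      by (rule cINF_lower) (rule J)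
    thus "(INF A\<in>carrier_mat n n. cheb_dist n A) \<le> real n - 1" using cJ by simp
    show "real n - 1 \<le> (INF A\<in>carrier_mat n n. cheb_dist n A)"
      using J by (intro cINF_greatest) (auto intro: ge)
  qed
  show ?thesis using part1 part2 by blast
qed



end
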